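(* Let $n\ge1$, $L_1,L_2,\underline b>0$, and let $(k_p,k_i,k_d)\in(0,\infty)^3$ satisfy $k_p^2>2k_ik_d+\bar k$ and $k_d^2>k_p/\underline b+\bar k$, where $\bar k=(L_1+L_2)(k_p+k_d)/\underline b$. Then the $3n\times3n$ matrix $$P=\begin{bmatrix}2k_ik_p\underline bI_n&2k_ik_d\underline bI_n&k_iI_n\\2k_ik_d\underline bI_n&(2k_pk_d\underline b-k_i)I_n&k_pI_n\\k_iI_n&k_pI_n&k_dI_n\end{bmatrix}$$ is positive definite. Moreover, there exists $\alpha>0$, depending only on $(k_p,k_i,k_d,L_1,L_2,\underline b)$, such that for all $n\times n$ real matrices $a,b,\theta$ with $\|a\|\le L_1$, $\|b\|\le L_2$ and $\mathrm{Sym}[\theta]\ge\underline bI_n$, the matrix $$A=\begin{bmatrix}0_n&I_n&0_n\\0_n&0_n&I_n\\-k_i\theta&a-k_p\theta&b-k_d\theta\end{bmatrix}$$ satisfies $PA+A^{\mathsf T}P\le-\alpha I_{3n}$.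
   Context: $\|\cdot\|$ is the operator norm induced by the Euclidean norm; $\mathrm{Sym}[\theta]=(\theta+\theta^{\mathsf T})/2$; for symmetric matrices, $S_1\ge S_2$ means $S_1-S_2$ is positive semidefinite; $0_n$ and $I_n$ are the $n\times n$ zero and identity matrices. *)

theory Defs
  imports Complex_Main
begin

text \<open>Real matrices of variable dimension, represented as functions on indices;
  only entries with indices below the stated dimension are ever used.\<close>

type_synonym rmat = "nat \<Rightarrow> nat \<Rightarrow> real"
type_synonym rvec = "nat \<Rightarrow> real"

definition mzero :: rmat where "mzero = (\<lambda>i j. 0)"
definition midm :: rmat where "midm = (\<lambda>i j. if i = j then 1 else 0)"
definition madd :: "rmat \<Rightarrow> rmat \<Rightarrow> rmat" where "madd A B = (\<lambda>i j. A i j + B i j)"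
definition msub :: "rmat \<Rightarrow> rmat \<Rightarrow> rmat" where "msub A B = (\<lambda>i j. A i j - B i j)"
definition mscale :: "real \<Rightarrow> rmat \<Rightarrow> rmat" where "mscale c A = (\<lambda>i j. c * A i j)"
definition mtr :: "rmat \<Rightarrow> rmat" where "mtr A = (\<lambda>i j. A j i)"

definition mmul :: "nat \<Rightarrow> rmat \<Rightarrow> rmat \<Rightarrow> rmat" where
  "mmul n A B = (\<lambda>i j. \<Sum>k<n. A i k * B k j)"

definition mvec :: "nat \<Rightarrow> rmat \<Rightarrow> rvec \<Rightarrow> rvec" where
  "mvec n A x = (\<lambda>i. \<Sum>j<n. A i j * x j)"

definition vnorm :: "nat \<Rightarrow> rvec \<Rightarrow> real" where
  "vnorm n x = sqrt (\<Sum>i<n. (x i)^2)"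

definition opnorm :: "nat \<Rightarrow> rmat \<Rightarrow> real" where
  "opnorm n A = Sup {vnorm n (mvec n A x) | x. vnorm n x \<le> 1}"

definition qform :: "nat \<Rightarrow> rmat \<Rightarrow> rvec \<Rightarrow> real" where
  "qform n M x = (\<Sum>i<n. \<Sum>j<n. x i * M i j * x j)"

definition msymmetric :: "nat \<Rightarrow> rmat \<Rightarrow> bool" where
  "msymmetric n M \<longleftrightarrow> (\<forall>i<n. \<forall>j<n. M i j = M j i)"

definition loewner_le :: "nat \<Rightarrow> rmat \<Rightarrow> rmat \<Rightarrow> bool" where
  "loewner_le n S1 S2 \<longleftrightarrow> msymmetric n S1 \<and> msymmetric n S2 \<and>
     (\<forall>x. qform n (msub S2 S1) x \<ge> 0)"

definition pos_def :: "nat \<Rightarrow> rmat \<Rightarrow> bool" where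
  "pos_def n M \<longleftrightarrow> msymmetric n M \<and> (\<forall>x. (\<exists>i<n. x i \<noteq> 0) \<longrightarrow> qform n M x > 0)"

definition msym :: "rmat \<Rightarrow> rmat" where
  "msym T = mscale (1/2) (madd T (mtr T))"

definition block3 :: "nat \<Rightarrow> rmat list list \<Rightarrow> rmat" where
  "block3 n B = (\<lambda>i j. if i < 3*n \<and> j < 3*n
       then (B ! (i div n) ! (j div n)) (i mod n) (j mod n) else 0)"

definition kbar :: "real \<Rightarrow> real \<Rightarrow> real \<Rightarrow> real \<Rightarrow> real \<Rightarrow> real" where
  "kbar L1 L2 bl kp kd = (L1 + L2) * (kp + kd) / bl"

definition Pmat :: "nat \<Rightarrow> real \<Rightarrow> real \<Rightarrow> real \<Rightarrow> real \<Rightarrow> rmat" where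
  "Pmat n kp ki kd bl = block3 n
     [[mscale (2*ki*kp*bl) midm, mscale (2*ki*kd*bl) midm, mscale ki midm],
      [mscale (2*ki*kd*bl) midm, mscale (2*kp*kd*bl - ki) midm, mscale kp midm],
      [mscale ki midm, mscale kp midm, mscale kd midm]]"

definition Amat :: "nat \<Rightarrow> real \<Rightarrow> real \<Rightarrow> real \<Rightarrow> rmat \<Rightarrow> rmat \<Rightarrow> rmat \<Rightarrow> rmat" where
  "Amat n kp ki kd a b \<theta> = block3 n
     [[mzero, midm, mzero],
      [mzero, mzero, midm],
      [mscale (- ki) \<theta>, msub a (mscale kp \<theta>), msub b (mscale kd \<theta>)]]"

end

theory Submission
  imports Defs "HOL-Analysis.L2_Norm"
begin

lemma sum3: fixes f :: "nat \<Rightarrow> 'a::comm_monoid_add"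
  shows "(\<Sum>i<3*n. f i) = (\<Sum>r<n. f r + f (n+r) + f (2*n+r))"
proof -
  have "(\<Sum>i<3*n. f i) = (\<Sum>q<3. sum f {q*n..<q*n+n})"
    using sum.nat_group[where g=f and k=n and n=3] by (simp add: mult.commute)
  also have "\<dots> = (\<Sum>q<3. \<Sum>r<n. f (r + q*n))"
  proof (rule sum.cong[OF refl])
    fix q show "sum f {q*n..<q*n+n} = (\<Sum>r<n. f (r + q*n))"
      using sum.shift_bounds_nat_ivl[where g=f and m=0 and k="q*n" and n=n] by (simp add: atLeast0LessThan add.commute)
  qed
  also have "\<dots> = (\<Sum>r<n. f r + f (n+r) + f (2*n+r))"
    by (simp add: numeral_3_eq_3 sum.distrib add.commute mult_2)
  finally show ?thesis .
qed

lemma idx_lt: "r < n \<Longrightarrow> k < 3 \<Longrightarrow> k*n + r < 3*(n::nat)"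
proof -
  assume a: "r<n" "k<3"
  have "k*n + r < k*n + n" using a by simp
  also have "\<dots> = Suc k * n" by simp
  also have "\<dots> \<le> 3*n" using a by (intro mult_le_mono1) simp
  finally show ?thesis .
qed

lemma block3_at: "r < n \<Longrightarrow> s < n \<Longrightarrow> k < 3 \<Longrightarrow> l < 3 \<Longrightarrow>
  block3 n B (k*n+r) (l*n+s) = (B!k!l) r s"
  using idx_lt[of r n k] idx_lt[of s n l] by (simp add: block3_def)

lemma mvec_block: assumes "r<n" "k<3"
  shows "mvec (3*n) (block3 n B) z (k*n+r) = (\<Sum>s<n. (B!k!0) r s * z s + (B!k!1) r s * z (n+s) + (B!k!2) r s * z (2*n+s))"
  unfolding mvec_def sum3
proof (rule sum.cong[OF refl])
  fix s assume "s \<in> {..<n}"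
  then have s: "s<n" by simp
  show "block3 n B (k * n + r) s * z s + block3 n B (k * n + r) (n + s) * z (n + s) +
         block3 n B (k * n + r) (2 * n + s) * z (2 * n + s) =
         (B ! k ! 0) r s * z s + (B ! k ! 1) r s * z (n + s) + (B ! k ! 2) r s * z (2 * n + s)"
    using block3_at[OF assms(1) s assms(2), of 0 B] block3_at[OF assms(1) s assms(2), of 1 B]
      block3_at[OF assms(1) s assms(2), of 2 B] by simp
qed

lemma midm_sum: "r < n \<Longrightarrow> (\<Sum>s<n. midm r s * g s) = g r"
proof -
  assume "r<n"
  have "(\<Sum>s<n. midm r s * g s) = (\<Sum>s<n. if r = s then g s else 0)"
    by (rule sum.cong) (auto simp: midm_def)
  then show ?thesis using \<open>r<n\<close> by (simp add: sum.delta)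
qed

lemma mscale_app: "mscale c M r s = c * M r s" by (simp add: mscale_def)

lemma qform_mvec: "qform N M z = (\<Sum>i<N. z i * mvec N M z i)"
  by (simp add: qform_def mvec_def sum_distrib_left mult_ac)

lemma qform_madd: "qform N (madd X Y) z = qform N X z + qform N Y z"
  by (simp add: qform_def madd_def algebra_simps sum.distrib)

lemma qform_msub: "qform N (msub X Y) z = qform N X z - qform N Y z"
  by (simp add: qform_def msub_def algebra_simps sum_subtractf)

lemma qform_mscale: "qform N (mscale c X) z = c * qform N X z"
  by (simp add: qform_def mscale_def sum_distrib_left mult_ac)

lemma qform_mtr: "qform N (mtr X) z = qform N X z"
  unfolding qform_def mtr_def by (subst sum.swap) (simp add: mult_ac)

lemma qform_midm: "qform N midm z = (\<Sum>i<N. (z i)^2)"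
  unfolding qform_mvec
proof (rule sum.cong[OF refl])
  fix i assume "i \<in> {..<N}"
  then have "mvec N midm z i = z i" unfolding mvec_def using midm_sum[of i N z] by simp
  then show "z i * mvec N midm z i = (z i)^2" by (simp add: power2_eq_square)
qed

lemma qform_msym: "qform N (msym X) z = qform N X z"
  unfolding msym_def qform_mscale qform_madd qform_mtr by simp

lemma qform_mmul1: "qform N (mmul N P A) z = (\<Sum>k<N. (\<Sum>i<N. z i * P i k) * mvec N A z k)"
proof -
  have "qform N (mmul N P A) z = (\<Sum>i<N. \<Sum>j<N. \<Sum>k<N. z i * P i k * (A k j * z j))"
    unfolding qform_def mmul_def by (simp add: sum_distrib_left sum_distrib_right mult_ac)
  also have "\<dots> = (\<Sum>i<N. \<Sum>k<N. \<Sum>j<N. z i * P i k * (A k j * z j))"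
    by (rule sum.cong[OF refl], rule sum.swap)
  also have "\<dots> = (\<Sum>k<N. \<Sum>i<N. \<Sum>j<N. z i * P i k * (A k j * z j))"
    by (rule sum.swap)
  also have "\<dots> = (\<Sum>k<N. (\<Sum>i<N. z i * P i k) * mvec N A z k)"
    by (simp only: mvec_def sum_product)
  finally show ?thesis .
qed

lemma qform_mmul2: "qform N (mmul N (mtr A) P) z = (\<Sum>k<N. mvec N A z k * mvec N P z k)"
proof -
  have "qform N (mmul N (mtr A) P) z = (\<Sum>i<N. \<Sum>j<N. \<Sum>k<N. (A k i * z i) * (P k j * z j))"
    unfolding qform_def mmul_def mtr_def by (simp add: sum_distrib_left sum_distrib_right mult_ac)
  also have "\<dots> = (\<Sum>i<N. \<Sum>k<N. \<Sum>j<N. (A k i * z i) * (P k j * z j))"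
    by (rule sum.cong[OF refl], rule sum.swap)
  also have "\<dots> = (\<Sum>k<N. \<Sum>i<N. \<Sum>j<N. (A k i * z i) * (P k j * z j))"
    by (rule sum.swap)
  also have "\<dots> = (\<Sum>k<N. mvec N A z k * mvec N P z k)"
    by (simp only: mvec_def sum_product)
  finally show ?thesis .
qed

lemma qform_PA: assumes "msymmetric N P"
  shows "qform N (madd (mmul N P A) (mmul N (mtr A) P)) z = 2 * (\<Sum>k<N. mvec N A z k * mvec N P z k)"
proof -
  have "(\<Sum>k<N. (\<Sum>i<N. z i * P i k) * mvec N A z k) = (\<Sum>k<N. mvec N A z k * mvec N P z k)"
  proof (rule sum.cong[OF refl])
    fix k assume k: "k \<in> {..<N}"
    have "(\<Sum>i<N. z i * P i k) = mvec N P z k"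
      unfolding mvec_def by (rule sum.cong[OF refl]) (use assms k in \<open>auto simp: msymmetric_def\<close>)
    then show "(\<Sum>i<N. z i * P i k) * mvec N A z k = mvec N A z k * mvec N P z k" by simp
  qed
  then show ?thesis unfolding qform_madd using qform_mmul1[of N P A z] qform_mmul2[of N A P z] by simp
qed

lemma sym_PA: assumes "msymmetric N P"
  shows "msymmetric N (madd (mmul N P A) (mmul N (mtr A) P))"
  unfolding msymmetric_def
proof (intro allI impI)
  fix i j assume ij: "i<N" "j<N"
  have 1: "(\<Sum>k<N. P i k * A k j) = (\<Sum>k<N. mtr A j k * P k i)"
    by (rule sum.cong[OF refl]) (use assms ij in \<open>auto simp: msymmetric_def mtr_def\<close>)
  have 2: "(\<Sum>k<N. mtr A i k * P k j) = (\<Sum>k<N. P j k * A k i)"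
    by (rule sum.cong[OF refl]) (use assms ij in \<open>auto simp: msymmetric_def mtr_def\<close>)
  show "madd (mmul N P A) (mmul N (mtr A) P) i j = madd (mmul N P A) (mmul N (mtr A) P) j i"
    unfolding madd_def mmul_def using 1 2 by simp
qed

lemma sym_scale_id: "msymmetric N (mscale c midm)"
  by (simp add: msymmetric_def mscale_def midm_def)


lemma lt3: "p < (3::nat) \<Longrightarrow> p = 0 \<or> p = 1 \<or> p = 2" by auto

lemma Pmat_sym: "msymmetric (3*n) (Pmat n kp ki kd bl)"
  unfolding msymmetric_def
proof (intro allI impI)
  fix i j assume ij: "i < 3*n" "j < 3*n"
  have "i div n < 3" "j div n < 3" using ij by (auto intro: less_mult_imp_div_less)
  then show "Pmat n kp ki kd bl i j = Pmat n kp ki kd bl j i"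
    unfolding Pmat_def block3_def using ij
    by (auto dest!: lt3 simp: mscale_def midm_def)
qed

lemma Pz0: assumes "r<n"
  shows "mvec (3*n) (Pmat n kp ki kd bl) z r = 2*ki*kp*bl * z r + 2*ki*kd*bl * z (n+r) + ki * z (2*n+r)"
proof -
  have "mvec (3*n) (Pmat n kp ki kd bl) z r =
    (\<Sum>s<n. midm r s * (2*ki*kp*bl * z s + 2*ki*kd*bl * z (n+s) + ki * z (2*n+s)))"
    unfolding Pmat_def using mvec_block[OF assms, of 0] by (simp add: mscale_app algebra_simps)
  then show ?thesis using midm_sum[OF assms] by simp
qed

lemma Pz1: assumes "r<n"
  shows "mvec (3*n) (Pmat n kp ki kd bl) z (n+r) = 2*ki*kd*bl * z r + (2*kp*kd*bl - ki) * z (n+r) + kp * z (2*n+r)"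
proof -
  have "mvec (3*n) (Pmat n kp ki kd bl) z (n+r) =
    (\<Sum>s<n. midm r s * (2*ki*kd*bl * z s + (2*kp*kd*bl - ki) * z (n+s) + kp * z (2*n+s)))"
    unfolding Pmat_def using mvec_block[OF assms, of 1] by (simp add: mscale_app algebra_simps)
  then show ?thesis using midm_sum[OF assms] by simp
qed

lemma Pz2: assumes "r<n"
  shows "mvec (3*n) (Pmat n kp ki kd bl) z (2*n+r) = ki * z r + kp * z (n+r) + kd * z (2*n+r)"
proof -
  have "mvec (3*n) (Pmat n kp ki kd bl) z (2*n+r) =
    (\<Sum>s<n. midm r s * (ki * z s + kp * z (n+s) + kd * z (2*n+s)))"
    unfolding Pmat_def using mvec_block[OF assms, of 2] by (simp add: mscale_app algebra_simps)
  then show ?thesis using midm_sum[OF assms] by simp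
qed

lemma Az0: assumes "r<n"
  shows "mvec (3*n) (Amat n kp ki kd a b \<theta>) z r = z (n+r)"
proof -
  have "mvec (3*n) (Amat n kp ki kd a b \<theta>) z r = (\<Sum>s<n. midm r s * z (n+s))"
    unfolding Amat_def using mvec_block[OF assms, of 0] by (simp add: mzero_def)
  then show ?thesis using midm_sum[OF assms] by simp
qed

lemma Az1: assumes "r<n"
  shows "mvec (3*n) (Amat n kp ki kd a b \<theta>) z (n+r) = z (2*n+r)"
proof -
  have "mvec (3*n) (Amat n kp ki kd a b \<theta>) z (n+r) = (\<Sum>s<n. midm r s * z (2*n+s))"
    unfolding Amat_def using mvec_block[OF assms, of 1] by (simp add: mzero_def)
  then show ?thesis using midm_sum[OF assms] by simp
qed

lemma Az2: assumes "r<n"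
  shows "mvec (3*n) (Amat n kp ki kd a b \<theta>) z (2*n+r) =
    mvec n a (\<lambda>s. z (n+s)) r + mvec n b (\<lambda>s. z (2*n+s)) r
    - mvec n \<theta> (\<lambda>s. ki * z s + kp * z (n+s) + kd * z (2*n+s)) r"
proof -
  have "mvec (3*n) (Amat n kp ki kd a b \<theta>) z (2*n+r) =
     (\<Sum>s<n. a r s * z (n+s) + b r s * z (2*n+s) - \<theta> r s * (ki * z s + kp * z (n+s) + kd * z (2*n+s)))"
    unfolding Amat_def using mvec_block[OF assms, of 2] by (simp add: mscale_app msub_def algebra_simps)
  then show ?thesis by (simp add: mvec_def sum.distrib sum_subtractf)
qed


lemma vnorm_L2: "vnorm n x = L2_set x {..<n}"
  by (simp add: vnorm_def L2_set_def)

lemma opnorm_bdd: "bdd_above {vnorm n (mvec n a x) | x. vnorm n x \<le> 1}"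
proof (rule bdd_aboveI[where M="\<Sum>i<n. \<Sum>j<n. \<bar>a i j\<bar>"])
  fix v assume "v \<in> {vnorm n (mvec n a x) | x. vnorm n x \<le> 1}"
  then obtain x where x: "vnorm n x \<le> 1" and v: "v = vnorm n (mvec n a x)" by blast
  have xj: "\<bar>x j\<bar> \<le> 1" if "j<n" for j
  proof -
    have "(x j)^2 \<le> (\<Sum>i<n. (x i)^2)" using that by (intro member_le_sum) auto
    then have "sqrt ((x j)^2) \<le> vnorm n x" unfolding vnorm_def by (rule real_sqrt_le_mono)
    then have "\<bar>x j\<bar> \<le> vnorm n x" by simp
    also have "\<dots> \<le> 1" using x by simp
    finally show ?thesis .
  qed
  have "vnorm n (mvec n a x) \<le> (\<Sum>i<n. \<bar>mvec n a x i\<bar>)"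
    unfolding vnorm_L2 by (rule L2_set_le_sum_abs)
  also have "\<dots> \<le> (\<Sum>i<n. \<Sum>j<n. \<bar>a i j\<bar>)"
  proof (rule sum_mono)
    fix i assume "i \<in> {..<n}"
    have "\<bar>mvec n a x i\<bar> \<le> (\<Sum>j<n. \<bar>a i j * x j\<bar>)"
      unfolding mvec_def by (rule sum_abs)
    also have "\<dots> \<le> (\<Sum>j<n. \<bar>a i j\<bar>)"
    proof (rule sum_mono)
      fix j assume "j \<in> {..<n}"
      then have "\<bar>x j\<bar> \<le> 1" using xj by simp
      then show "\<bar>a i j * x j\<bar> \<le> \<bar>a i j\<bar>"
        by (simp add: abs_mult mult_left_le)
    qed
    finally show "\<bar>mvec n a x i\<bar> \<le> (\<Sum>j<n. \<bar>a i j\<bar>)" .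
  qed
  finally show "v \<le> (\<Sum>i<n. \<Sum>j<n. \<bar>a i j\<bar>)" using v by simp
qed

lemma opnorm_sq: assumes "opnorm n a \<le> L"
  shows "(\<Sum>r<n. (mvec n a x r)^2) \<le> L^2 * (\<Sum>r<n. (x r)^2)"
proof (cases "vnorm n x = 0")
  case True
  then have "(\<Sum>r<n. (x r)^2) = 0" by (simp add: vnorm_def)
  then have "\<forall>r\<in>{..<n}. (x r)^2 = 0" by (subst (asm) sum_nonneg_eq_0_iff) auto
  then have "mvec n a x r = 0" if "r<n" for r unfolding mvec_def by simp
  then have "(\<Sum>r<n. (mvec n a x r)^2) = 0" by simp
  then show ?thesis by (simp add: sum_nonneg)
next
  case False
  define c where "c = vnorm n x"
  have c0: "c > 0" using False unfolding c_def vnorm_def by (simp add: sum_nonneg order_less_le)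
  define x' where "x' = (\<lambda>j. x j / c)"
  have S: "(\<Sum>r<n. (x r)^2) = c^2" by (simp add: c_def vnorm_def sum_nonneg)
  have "(\<Sum>r<n. (x' r)^2) = (\<Sum>r<n. (x r)^2) / c^2"
    by (simp add: x'_def power_divide sum_divide_distrib)
  then have "(\<Sum>r<n. (x' r)^2) = 1" using S c0 by simp
  then have vx': "vnorm n x' \<le> 1" by (simp add: vnorm_def)
  have mv: "mvec n a x' r = mvec n a x r / c" for r
    by (simp add: mvec_def x'_def sum_divide_distrib)
  have "vnorm n (mvec n a x') = vnorm n (mvec n a x) / c"
  proof -
    have "(\<Sum>r<n. (mvec n a x' r)^2) = (\<Sum>r<n. (mvec n a x r)^2) / c^2"
      by (simp add: mv power_divide sum_divide_distrib)
    then show ?thesis using c0 by (simp add: vnorm_def real_sqrt_divide)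
  qed
  moreover have "vnorm n (mvec n a x') \<le> opnorm n a"
    unfolding opnorm_def by (rule cSup_upper[OF _ opnorm_bdd]) (use vx' in blast)
  ultimately have "vnorm n (mvec n a x) / c \<le> L" using assms by simp
  then have le: "vnorm n (mvec n a x) \<le> L * c" using c0 by (simp add: divide_le_eq)
  have "0 \<le> vnorm n (mvec n a x)" unfolding vnorm_def by (intro real_sqrt_ge_zero sum_nonneg) simp
  then have "(vnorm n (mvec n a x))^2 \<le> (L*c)^2" using le by (intro power_mono) auto
  moreover have "(vnorm n (mvec n a x))^2 = (\<Sum>r<n. (mvec n a x r)^2)"
    using sum_nonneg[of "{..<n}" "\<lambda>i. (mvec n a x i)^2"] by (simp add: vnorm_def)
  ultimately show ?thesis using S by (simp add: power_mult_distrib)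
qed



lemma amgm: fixes p q \<mu> :: real assumes "\<mu> > 0"
  shows "0 \<le> p^2/(2*\<mu>) + \<mu>*q^2/2 - p*q"
proof -
  have "p^2/(2*\<mu>) + \<mu>*q^2/2 - p*q = (p - \<mu>*q)^2/(2*\<mu>)"
    using assms by (simp add: field_simps power2_eq_square)
  then show ?thesis using assms by simp
qed

lemma pointwise:
  fixes L1 L2 bl kp ki kd m x1 x2 x3 A B :: real
  assumes pos: "L1>0" "L2>0" "bl>0" "kp>0" "ki>0" "kd>0"
    and m1: "m \<le> ki^2*(bl - L1/(2*kd) - L2/(2*kp))"
    and m2: "m \<le> bl*(kp^2 - 2*ki*kd) - (L1+L2)*(kp+kd)"
    and m3: "m \<le> bl*kd^2 - kp - (L1+L2)*(kp+kd)"
  shows "x2*(2*ki*kp*bl*x1 + 2*ki*kd*bl*x2 + ki*x3) + x3*(2*ki*kd*bl*x1 + (2*kp*kd*bl - ki)*x2 + kp*x3)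
     - bl*(ki*x1+kp*x2+kd*x3)^2 + (A+B)*(ki*x1+kp*x2+kd*x3)
   \<le> -m*(x1^2+x2^2+x3^2) + (2*kd+kp)/(2*L1)*(A^2 - L1^2*x2^2) + (2*kp+kd)/(2*L2)*(B^2 - L2^2*x3^2)"
proof -
  define am where "am = (\<lambda>p q \<mu>::real. p^2/(2*\<mu>) + \<mu>*q^2/2 - p*q)"
  have d1: "0 \<le> am A (ki*x1) (L1/kd)" unfolding am_def using pos by (intro amgm) simp
  have d2: "0 \<le> kp * am A x2 L1" unfolding am_def using pos amgm[of L1 A x2] by simp
  have d3: "0 \<le> kd * am A x3 L1" unfolding am_def using pos amgm[of L1 A x3] by simp
  have d4: "0 \<le> am B (ki*x1) (L2/kp)" unfolding am_def using pos by (intro amgm) simp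
  have d5: "0 \<le> kp * am B x2 L2" unfolding am_def using pos amgm[of L2 B x2] by simp
  have d6: "0 \<le> kd * am B x3 L2" unfolding am_def using pos amgm[of L2 B x3] by simp
  define U1 where "U1 = ki^2*(bl - L1/(2*kd) - L2/(2*kp))"
  define V1 where "V1 = bl*(kp^2-2*ki*kd) - kp*L1 - kd*L1 - kp*L2/2"
  define S1 where "S1 = bl*kd^2 - kp - kd*L1/2 - kd*L2 - kp*L2"
  have e1: "0 \<le> (U1 - m)*x1^2" using m1 unfolding U1_def by simp
  have "V1 \<ge> bl*(kp^2 - 2*ki*kd) - (L1+L2)*(kp+kd)"
    unfolding V1_def using pos by (simp add: algebra_simps)
  then have e2: "0 \<le> (V1 - m)*x2^2" using m2 by simp
  have "S1 \<ge> bl*kd^2 - kp - (L1+L2)*(kp+kd)"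
    unfolding S1_def using pos by (simp add: algebra_simps)
  then have e3: "0 \<le> (S1 - m)*x3^2" using m3 by simp
  have key: "(-m*(x1^2+x2^2+x3^2) + (2*kd+kp)/(2*L1)*(A^2 - L1^2*x2^2) + (2*kp+kd)/(2*L2)*(B^2 - L2^2*x3^2))
     - (x2*(2*ki*kp*bl*x1 + 2*ki*kd*bl*x2 + ki*x3) + x3*(2*ki*kd*bl*x1 + (2*kp*kd*bl - ki)*x2 + kp*x3)
     - bl*(ki*x1+kp*x2+kd*x3)^2 + (A+B)*(ki*x1+kp*x2+kd*x3))
    = am A (ki*x1) (L1/kd) + kp * am A x2 L1 + kd * am A x3 L1 + am B (ki*x1) (L2/kp)
      + kp * am B x2 L2 + kd * am B x3 L2 + (U1 - m)*x1^2 + (V1 - m)*x2^2 + (S1 - m)*x3^2"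
    unfolding am_def U1_def V1_def S1_def using pos
    by (simp add: field_simps power2_eq_square)
  show ?thesis using key d1 d2 d3 d4 d5 d6 e1 e2 e3 by linarith
qed



lemma two_by_two: fixes p q r x y :: real
  assumes "p > 0" "p*r > q^2"
  shows "0 \<le> p*x^2 + 2*q*x*y + r*y^2" "(x \<noteq> 0 \<or> y \<noteq> 0) \<Longrightarrow> 0 < p*x^2 + 2*q*x*y + r*y^2"
proof -
  have id: "p*(p*x^2 + 2*q*x*y + r*y^2) = (p*x + q*y)^2 + (p*r - q^2)*y^2"
    by (simp add: algebra_simps power2_eq_square)
  have "0 \<le> (p*x + q*y)^2 + (p*r - q^2)*y^2" using assms by simp
  then have "0 \<le> p*(p*x^2 + 2*q*x*y + r*y^2)" using id by simp
  then show "0 \<le> p*x^2 + 2*q*x*y + r*y^2" using assms(1) by (simp add: zero_le_mult_iff)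
  assume nz: "x \<noteq> 0 \<or> y \<noteq> 0"
  have "0 < (p*x + q*y)^2 + (p*r - q^2)*y^2"
  proof (cases "y = 0")
    case True then have "x \<noteq> 0" using nz by simp
    then show ?thesis using True assms by simp
  next
    case False then have "0 < (p*r - q^2)*y^2" using assms by simp
    then show ?thesis using zero_le_power2[of "p*x+q*y"] by linarith
  qed
  then have "0 < p*(p*x^2 + 2*q*x*y + r*y^2)" using id by simp
  then show "0 < p*x^2 + 2*q*x*y + r*y^2" using assms(1) by (simp add: zero_less_mult_iff)
qed

lemma P_form:
  fixes bl kp ki kd x1 x2 x3 :: real
  assumes pos: "bl>0" "kp>0" "ki>0" "kd>0"
    and c1: "kp^2 > 2*ki*kd" and c2: "bl*kd^2 > kp"
  defines "F \<equiv> x1*(2*ki*kp*bl*x1 + 2*ki*kd*bl*x2 + ki*x3) + x2*(2*ki*kd*bl*x1 + (2*kp*kd*bl - ki)*x2 + kp*x3)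
     + x3*(ki*x1 + kp*x2 + kd*x3)"
  shows "0 \<le> F" "(x1 \<noteq> 0 \<or> x2 \<noteq> 0 \<or> x3 \<noteq> 0) \<Longrightarrow> 0 < F"
proof -
  define \<beta> where "\<beta> = bl*kd^2"
  define X where "X = 2*kp*\<beta> - ki*kd"
  define p where "p = ki*X/kd^2"
  define q where "q = ki*(2*\<beta> - kp)/kd"
  define r where "r = (X - kp^2)/kd"
  have Fid: "F = kd*(x3 + (ki*x1 + kp*x2)/kd)^2 + (p*x1^2 + 2*q*x1*x2 + r*x2^2)"
    unfolding F_def p_def q_def r_def X_def \<beta>_def using pos
    by (simp add: field_simps power2_eq_square)
  have t: "ki*kd < kp^2/2" using c1 by simp
  have bk: "\<beta> > kp" using c2 \<beta>_def by simp
  have Xl: "X > 2*kp*\<beta> - kp^2/2" using t X_def by simp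
  have kb: "kp*\<beta> > kp^2" using bk pos by (simp add: power2_eq_square)
  have kp2: "kp^2 > 0" using pos by simp
  have l1: "2*kp*\<beta> - kp^2/2 > 0" using kb kp2 by linarith
  have l2: "2*kp*\<beta> - 3*kp^2/2 > 0" using kb kp2 by linarith
  have Xp: "X > 0" using Xl l1 by simp
  have X2: "X - kp^2 > 2*kp*\<beta> - 3*kp^2/2" using Xl by simp
  have prod1: "X*(X - kp^2) > (2*kp*\<beta> - kp^2/2)*(2*kp*\<beta> - 3*kp^2/2)"
    using Xl X2 l1 l2 by (intro mult_strict_mono) auto
  have prod2: "ki*kd*(2*\<beta>-kp)^2 \<le> (kp^2/2)*(2*\<beta>-kp)^2"
    using t by (intro mult_right_mono) auto
  define d where "d = \<beta> - kp"
  have "(2*kp*\<beta> - kp^2/2)*(2*kp*\<beta> - 3*kp^2/2) - (kp^2/2)*(2*\<beta>-kp)^2 = kp^2*(2*d^2 + 2*d*kp + kp^2/4)"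
    unfolding d_def by (simp add: algebra_simps power2_eq_square)
  moreover have "kp^2*(2*d^2 + 2*d*kp + kp^2/4) > 0"
  proof -
    have d0: "d > 0" using bk unfolding d_def by simp
    have "2*d*kp > 0" using d0 pos by simp
    moreover have "2*d^2 \<ge> 0" by simp
    ultimately have "2*d^2 + 2*d*kp + kp^2/4 > 0" using kp2 by linarith
    then show ?thesis using kp2 by simp
  qed
  ultimately have main: "X*(X - kp^2) - ki*kd*(2*\<beta>-kp)^2 > 0" using prod1 prod2 by linarith
  have "p*r - q^2 = ki/kd^3 * (X*(X - kp^2) - ki*kd*(2*\<beta>-kp)^2)"
    unfolding p_def q_def r_def using pos by (simp add: field_simps power2_eq_square power3_eq_cube)
  moreover have "ki/kd^3 > 0" using pos by simp
  ultimately have pr: "p*r > q^2" using main mult_pos_pos[of "ki/kd^3" "X*(X - kp^2) - ki*kd*(2*\<beta>-kp)^2"] by linarith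
  have pp: "p > 0" unfolding p_def using pos Xp by simp
  have sq: "0 \<le> kd*(x3 + (ki*x1 + kp*x2)/kd)^2" using pos by simp
  show "0 \<le> F" using Fid sq two_by_two(1)[OF pp pr, of x1 x2] by linarith
  assume nz: "x1 \<noteq> 0 \<or> x2 \<noteq> 0 \<or> x3 \<noteq> 0"
  show "0 < F"
  proof (cases "x1 \<noteq> 0 \<or> x2 \<noteq> 0")
    case True
    then show ?thesis using Fid sq two_by_two(2)[OF pp pr True] by linarith
  next
    case False
    then have "F = kd*x3^2" using Fid by simp
    then show ?thesis using False nz pos by simp
  qed
qed



theorem proposition4p2:
  fixes L1 L2 bl kp ki kd :: real
  assumes "L1 > 0" "L2 > 0" "bl > 0" "kp > 0" "ki > 0" "kd > 0"
    and "kp^2 > 2*ki*kd + kbar L1 L2 bl kp kd"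
    and "kd^2 > kp / bl + kbar L1 L2 bl kp kd"
  shows "(\<forall>n\<ge>1. pos_def (3*n) (Pmat n kp ki kd bl)) \<and>
    (\<exists>\<alpha>>0. \<forall>n\<ge>1. \<forall>a b \<theta>.
       opnorm n a \<le> L1 \<longrightarrow> opnorm n b \<le> L2 \<longrightarrow>
       loewner_le n (mscale bl midm) (msym \<theta>) \<longrightarrow>
       loewner_le (3*n)
         (madd (mmul (3*n) (Pmat n kp ki kd bl) (Amat n kp ki kd a b \<theta>))
               (mmul (3*n) (mtr (Amat n kp ki kd a b \<theta>)) (Pmat n kp ki kd bl)))
         (mscale (- \<alpha>) midm))"
proof -
  note pos = assms(1-6)
  define K where "K = (L1+L2)*(kp+kd)"
  have K0: "K > 0" unfolding K_def using pos by simp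
  have kbK: "bl * kbar L1 L2 bl kp kd = K" using pos by (simp add: kbar_def K_def)
  have kb0: "kbar L1 L2 bl kp kd > 0" using pos by (simp add: kbar_def)
  have "bl * kbar L1 L2 bl kp kd < bl * (kp^2 - 2*ki*kd)"
    using assms(7) pos(3) by (intro mult_strict_left_mono) auto
  then have h1: "bl*(kp^2 - 2*ki*kd) > K" using kbK by simp
  have "bl * (kp/bl + kbar L1 L2 bl kp kd) < bl * kd^2"
    using assms(8) pos(3) by (intro mult_strict_left_mono) auto
  then have h2: "bl*kd^2 - kp > K" using kbK pos by (simp add: distrib_left)
  have c1: "kp^2 > 2*ki*kd" using assms(7) kb0 by simp
  have c2: "bl*kd^2 > kp" using h2 K0 by simp
  have Lkd: "L1 < bl*kd"
  proof -
    have "L1*kd < K" unfolding K_def using pos by (simp add: algebra_simps add_pos_pos)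
    moreover have "bl*kd^2 = (bl*kd)*kd" by (simp add: power2_eq_square)
    ultimately have "L1*kd < (bl*kd)*kd" using h2 pos by linarith
    then show ?thesis using pos mult_right_less_imp_less[of L1 kd "bl*kd"] by simp
  qed
  have Lkp: "L2 < bl*kp"
  proof -
    have "L2*kp < K" unfolding K_def using pos by (simp add: algebra_simps add_pos_pos)
    moreover have "bl*(kp^2 - 2*ki*kd) \<le> bl*kp^2" using pos by (simp add: algebra_simps)
    moreover have "bl*kp^2 = (bl*kp)*kp" by (simp add: power2_eq_square)
    ultimately have "L2*kp < (bl*kp)*kp" using h1 by linarith
    then show ?thesis using pos mult_right_less_imp_less[of L2 kp "bl*kp"] by simp
  qed
  define m1 where "m1 = ki^2*(bl - L1/(2*kd) - L2/(2*kp))"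
  have "L1/(2*kd) < bl/2" using Lkd pos by (simp add: divide_less_eq mult.commute)
  moreover have "L2/(2*kp) < bl/2" using Lkp pos by (simp add: divide_less_eq mult.commute)
  ultimately have m1p: "m1 > 0" unfolding m1_def using pos by simp
  define m where "m = min m1 (min (bl*(kp^2 - 2*ki*kd) - K) (bl*kd^2 - kp - K))"
  have mp: "m > 0" unfolding m_def using m1p h1 h2 by simp
  have PD: "\<forall>n\<ge>1. pos_def (3*n) (Pmat n kp ki kd bl)"
  proof (intro allI impI)
    fix n :: nat assume n1: "n \<ge> 1"
    let ?P = "Pmat n kp ki kd bl"
    define F where "F = (\<lambda>x1 x2 x3::real. x1*(2*ki*kp*bl*x1 + 2*ki*kd*bl*x2 + ki*x3) + x2*(2*ki*kd*bl*x1 + (2*kp*kd*bl - ki)*x2 + kp*x3)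
     + x3*(ki*x1 + kp*x2 + kd*x3))"
    show "pos_def (3*n) ?P"
      unfolding pos_def_def
    proof (intro conjI allI impI)
      show "msymmetric (3*n) ?P" by (rule Pmat_sym)
      fix z :: "nat \<Rightarrow> real" assume "\<exists>i<3*n. z i \<noteq> 0"
      then obtain i where i: "i < 3*n" "z i \<noteq> 0" by blast
      have q: "qform (3*n) ?P z = (\<Sum>r<n. F (z r) (z (n+r)) (z (2*n+r)))"
        unfolding qform_mvec sum3
        by (rule sum.cong[OF refl]) (simp add: Pz0 Pz1 Pz2 F_def)
      define r where "r = i mod n"
      have rn: "r < n" using n1 unfolding r_def by simp
      have "i div n < 3" using i by (auto intro: less_mult_imp_div_less)
      moreover have "i = (i div n)*n + r" unfolding r_def by simp
      ultimately have "i = r \<or> i = n + r \<or> i = 2*n + r" by (auto dest!: lt3)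
      then have nz: "z r \<noteq> 0 \<or> z (n+r) \<noteq> 0 \<or> z (2*n+r) \<noteq> 0" using i by auto
      show "qform (3*n) ?P z > 0" unfolding q
      proof (rule sum_pos2[where i=r])
        show "finite {..<n}" by simp
        show "r \<in> {..<n}" using rn by simp
        show "0 < F (z r) (z (n+r)) (z (2*n+r))"
          unfolding F_def using P_form(2)[OF pos(3,4,5,6) c1 c2 nz] .
        show "\<And>s. s \<in> {..<n} \<Longrightarrow> 0 \<le> F (z s) (z (n+s)) (z (2*n+s))"
          unfolding F_def using P_form(1)[OF pos(3,4,5,6) c1 c2] by blast
      qed
    qed
  qed
  have NEG: "\<forall>n\<ge>1. \<forall>a b \<theta>.
       opnorm n a \<le> L1 \<longrightarrow> opnorm n b \<le> L2 \<longrightarrow>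
       loewner_le n (mscale bl midm) (msym \<theta>) \<longrightarrow>
       loewner_le (3*n)
         (madd (mmul (3*n) (Pmat n kp ki kd bl) (Amat n kp ki kd a b \<theta>))
               (mmul (3*n) (mtr (Amat n kp ki kd a b \<theta>)) (Pmat n kp ki kd bl)))
         (mscale (- (2*m)) midm)"
  proof (intro allI impI)
    fix n :: nat and a b \<theta> :: rmat
    assume n1: "n \<ge> 1" and na: "opnorm n a \<le> L1" and nb: "opnorm n b \<le> L2"
      and th: "loewner_le n (mscale bl midm) (msym \<theta>)"
    let ?P = "Pmat n kp ki kd bl"
    let ?A = "Amat n kp ki kd a b \<theta>"
    let ?M = "madd (mmul (3*n) ?P ?A) (mmul (3*n) (mtr ?A) ?P)"
    show "loewner_le (3*n) ?M (mscale (- (2*m)) midm)"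
      unfolding loewner_le_def
    proof (intro conjI allI)
      show "msymmetric (3*n) ?M" by (rule sym_PA[OF Pmat_sym])
      show "msymmetric (3*n) (mscale (- (2*m)) midm)" by (rule sym_scale_id)
      fix z :: "nat \<Rightarrow> real"
      define x1 where "x1 = z"
      define x2 where "x2 = (\<lambda>s. z (n+s))"
      define x3 where "x3 = (\<lambda>s. z (2*n+s))"
      define y where "y = (\<lambda>s. ki * z s + kp * z (n+s) + kd * z (2*n+s))"
      define Aa where "Aa = mvec n a x2"
      define Bb where "Bb = mvec n b x3"
      define Th where "Th = mvec n \<theta> y"
      define g where "g = (\<lambda>r. x2 r*(2*ki*kp*bl*x1 r + 2*ki*kd*bl*x2 r + ki*x3 r)
          + x3 r*(2*ki*kd*bl*x1 r + (2*kp*kd*bl - ki)*x2 r + kp*x3 r) + (Aa r + Bb r)*y r)"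
      define E where "E = (\<Sum>k<3*n. mvec (3*n) ?A z k * mvec (3*n) ?P z k)"
      have Eeq: "E = (\<Sum>r<n. g r - Th r * y r)"
        unfolding E_def sum3
      proof (rule sum.cong[OF refl])
        fix r assume "r \<in> {..<n}"
        then have rn: "r < n" by simp
        show "mvec (3*n) ?A z r * mvec (3*n) ?P z r + mvec (3*n) ?A z (n+r) * mvec (3*n) ?P z (n+r)
          + mvec (3*n) ?A z (2*n+r) * mvec (3*n) ?P z (2*n+r) = g r - Th r * y r"
          by (simp only: Pz0[OF rn] Pz1[OF rn] Pz2[OF rn] Az0[OF rn] Az1[OF rn] Az2[OF rn])
             (simp add: g_def x1_def x2_def x3_def y_def Aa_def Bb_def Th_def algebra_simps)
      qed
      have "qform n (msub (msym \<theta>) (mscale bl midm)) y \<ge> 0" using th unfolding loewner_le_def by blast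
      then have "qform n \<theta> y \<ge> bl * (\<Sum>r<n. (y r)^2)"
        unfolding qform_msub qform_msym qform_mscale qform_midm by simp
      moreover have "qform n \<theta> y = (\<Sum>r<n. Th r * y r)"
        unfolding qform_mvec Th_def by (simp add: mult.commute)
      ultimately have thb: "(\<Sum>r<n. Th r * y r) \<ge> bl * (\<Sum>r<n. (y r)^2)" by simp
      define cA where "cA = (2*kd+kp)/(2*L1)"
      define cB where "cB = (2*kp+kd)/(2*L2)"
      have pw: "g r - bl * (y r)^2 \<le> -m*((x1 r)^2+(x2 r)^2+(x3 r)^2) + cA*((Aa r)^2 - L1^2*(x2 r)^2)
          + cB*((Bb r)^2 - L2^2*(x3 r)^2)" for r
      proof -
        have mm: "m \<le> ki^2*(bl - L1/(2*kd) - L2/(2*kp))" "m \<le> bl*(kp^2 - 2*ki*kd) - (L1+L2)*(kp+kd)"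
          "m \<le> bl*kd^2 - kp - (L1+L2)*(kp+kd)" unfolding m_def m1_def K_def by simp_all
        have yr: "y r = ki*x1 r + kp*x2 r + kd*x3 r" unfolding y_def x1_def x2_def x3_def by simp
        show ?thesis unfolding g_def cA_def cB_def yr using pointwise[of L1 L2 bl kp ki kd m "x2 r" "x1 r" "x3 r" "Aa r" "Bb r", OF pos mm] by simp
      qed
      have sA: "(\<Sum>r<n. (Aa r)^2) \<le> L1^2 * (\<Sum>r<n. (x2 r)^2)" unfolding Aa_def by (rule opnorm_sq[OF na])
      have sB: "(\<Sum>r<n. (Bb r)^2) \<le> L2^2 * (\<Sum>r<n. (x3 r)^2)" unfolding Bb_def by (rule opnorm_sq[OF nb])
      have cA0: "cA \<ge> 0" unfolding cA_def using pos by simp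
      have cB0: "cB \<ge> 0" unfolding cB_def using pos by simp
      have "(\<Sum>r<n. g r - bl * (y r)^2) \<le> (\<Sum>r<n. -m*((x1 r)^2+(x2 r)^2+(x3 r)^2) + cA*((Aa r)^2 - L1^2*(x2 r)^2)
          + cB*((Bb r)^2 - L2^2*(x3 r)^2))" by (rule sum_mono) (rule pw)
      also have "\<dots> = -m*(\<Sum>r<n. (x1 r)^2+(x2 r)^2+(x3 r)^2) + cA*((\<Sum>r<n. (Aa r)^2) - L1^2*(\<Sum>r<n. (x2 r)^2))
          + cB*((\<Sum>r<n. (Bb r)^2) - L2^2*(\<Sum>r<n. (x3 r)^2))"
      proof -
        have p1: "(\<Sum>r<n. cA*((Aa r)^2 - L1^2*(x2 r)^2)) = cA*((\<Sum>r<n. (Aa r)^2) - L1^2*(\<Sum>r<n. (x2 r)^2))"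
          by (simp add: sum_distrib_left sum_subtractf right_diff_distrib mult.assoc)
        have p2: "(\<Sum>r<n. cB*((Bb r)^2 - L2^2*(x3 r)^2)) = cB*((\<Sum>r<n. (Bb r)^2) - L2^2*(\<Sum>r<n. (x3 r)^2))"
          by (simp add: sum_distrib_left sum_subtractf right_diff_distrib mult.assoc)
        have p3: "(\<Sum>r<n. m*((x1 r)^2+(x2 r)^2+(x3 r)^2)) = m*(\<Sum>r<n. (x1 r)^2+(x2 r)^2+(x3 r)^2)"
          by (simp add: sum_distrib_left)
        have p4: "(\<Sum>r<n. -m*((x1 r)^2+(x2 r)^2+(x3 r)^2) + cA*((Aa r)^2 - L1^2*(x2 r)^2)
          + cB*((Bb r)^2 - L2^2*(x3 r)^2)) = - (\<Sum>r<n. m*((x1 r)^2+(x2 r)^2+(x3 r)^2))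
          + (\<Sum>r<n. cA*((Aa r)^2 - L1^2*(x2 r)^2)) + (\<Sum>r<n. cB*((Bb r)^2 - L2^2*(x3 r)^2))"
          by (simp add: sum.distrib sum_negf sum_subtractf)
        show ?thesis using p1 p2 p3 p4 by linarith
      qed
      also have "\<dots> \<le> -m*(\<Sum>r<n. (x1 r)^2+(x2 r)^2+(x3 r)^2)"
      proof -
        have "cA*((\<Sum>r<n. (Aa r)^2) - L1^2*(\<Sum>r<n. (x2 r)^2)) \<le> 0"
          using cA0 sA by (simp add: mult_nonneg_nonpos)
        moreover have "cB*((\<Sum>r<n. (Bb r)^2) - L2^2*(\<Sum>r<n. (x3 r)^2)) \<le> 0"
          using cB0 sB by (simp add: mult_nonneg_nonpos)
        ultimately show ?thesis by linarith
      qed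
      finally have sumb: "(\<Sum>r<n. g r) - bl * (\<Sum>r<n. (y r)^2) \<le> -m*(\<Sum>r<n. (x1 r)^2+(x2 r)^2+(x3 r)^2)"
        by (simp add: sum_subtractf sum_distrib_left)
      have zz: "(\<Sum>i<3*n. (z i)^2) = (\<Sum>r<n. (x1 r)^2+(x2 r)^2+(x3 r)^2)"
        unfolding sum3 x1_def x2_def x3_def by simp
      have "E \<le> -m*(\<Sum>i<3*n. (z i)^2)"
        using Eeq thb sumb zz by (simp add: sum_subtractf)
      then show "qform (3*n) (msub (mscale (- (2*m)) midm) ?M) z \<ge> 0"
        unfolding qform_msub qform_mscale qform_midm qform_PA[OF Pmat_sym] E_def[symmetric] by simp
    qed
  qed
  show ?thesis using PD NEG mp by (intro conjI exI[of _ "2*m"]) auto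
qed
end
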